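(* Let $g_1,g_2$ be monic divisors of $x^m-1$ over $\mathbb{F}_{q^2}$ and $v\in\mathcal{R}$ with $\gcd(v^2-1,x^m-1)=1$, and let $\mathcal{D}_3$ be the QC code of length $2m$ over $\mathbb{F}_{q^2}$ generated by $(g_1,vg_1)$ and $(vg_2,g_2)$. Then $\mathcal{D}_3$ is Hermitian dual-containing iff $g_1\mid g_1^{\perp_H}(1+v\overline{v}^{[q]})$, $g_1\mid g_2^{\perp_H}(\overline{v}^{[q]}+v)$ and $g_2\mid g_2^{\perp_H}(1+v\overline{v}^{[q]})$.
   Context: $q$ a prime power; $\mathcal{R}=\mathbb{F}_{q^2}[x]/(x^m-1)$, elements identified with representatives of degree $<m$; $[k]=(k_0,\dots,k_{m-1})$; $\overline{k}(x)=k(x^{-1})\bmod(x^m-1)$; $k^{[q]}=\sum k_i^qx^i$; $f^*(x)=x^{\deg f}f(1/x)$; for $k\in\mathcal{R}$, $f=\frac{x^m-1}{\gcd(k,x^m-1)}$, $k^{\perp}=f(0)^{-1}f^*$, $k^{\perp_H}=(k^{[q]})^{\perp}$. "$g\mid a$" for $g\mid x^m-1$ means $g$ divides the representative of $a$. The QC code generated by $(u_{i1},u_{i2})$, $i=1,2$, is $\{([r_1u_{11}+r_2u_{21}],[r_1u_{12}+r_2u_{22}]):r_i\in\mathcal{R}\}$. Hermitian inner product $\sum u_i^qv_i$; dual-containing means $\mathcal{D}_3^{\perp_H}\subseteq\mathcal{D}_3$. *)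

theory Defs
  imports "HOL-Computational_Algebra.Computational_Algebra"
begin

definition xm1 :: "nat \<Rightarrow> 'a::field_gcd poly" where
  "xm1 m = monom 1 m - 1"

definition rmod :: "nat \<Rightarrow> 'a::field_gcd poly \<Rightarrow> 'a poly" where
  "rmod m p = p mod xm1 m"

definition cvec :: "nat \<Rightarrow> 'a::field_gcd poly \<Rightarrow> 'a list" where
  "cvec m p = map (\<lambda>i. coeff (rmod m p) i) [0..<m]"

text \<open>bar k (x) = k(x^{-1}) mod (x^m - 1).\<close>
definition conjrev :: "nat \<Rightarrow> 'a::field_gcd poly \<Rightarrow> 'a poly" where
  "conjrev m k = (\<Sum>i<m. monom (coeff (rmod m k) i) ((m - i) mod m))"

definition frob :: "nat \<Rightarrow> nat \<Rightarrow> 'a::field_gcd poly \<Rightarrow> 'a poly" where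
  "frob q m k = map_poly (\<lambda>c. c ^ q) (rmod m k)"

definition perp :: "nat \<Rightarrow> 'a::field_gcd poly \<Rightarrow> 'a poly" where
  "perp m k = (let f = xm1 m div gcd (rmod m k) (xm1 m)
               in smult (inverse (coeff f 0)) (reflect_poly f))"

definition perpH :: "nat \<Rightarrow> nat \<Rightarrow> 'a::field_gcd poly \<Rightarrow> 'a poly" where
  "perpH q m k = perp m (frob q m k)"

definition qc_code :: "nat \<Rightarrow> 'a::field_gcd poly \<Rightarrow> 'a poly \<Rightarrow> 'a poly \<Rightarrow> 'a poly \<Rightarrow> 'a list set" where
  "qc_code m u11 u12 u21 u22 =
     {cvec m (r1 * u11 + r2 * u21) @ cvec m (r1 * u12 + r2 * u22) | r1 r2. True}"

definition herm_ip :: "nat \<Rightarrow> 'a::field_gcd list \<Rightarrow> 'a list \<Rightarrow> 'a" where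
  "herm_ip q u v = (\<Sum>i<length u. (u ! i) ^ q * (v ! i))"

definition herm_dual :: "nat \<Rightarrow> nat \<Rightarrow> 'a::field_gcd list set \<Rightarrow> 'a list set" where
  "herm_dual q n C = {u. length u = n \<and> (\<forall>c\<in>C. herm_ip q u c = 0)}"

definition prime_power :: "nat \<Rightarrow> bool" where
  "prime_power q = (\<exists>p k. prime p \<and> k > 0 \<and> q = p ^ k)"

end

theory Submission imports Defs begin

definition pc :: "nat \<Rightarrow> 'a::field_gcd poly \<Rightarrow> 'a poly \<Rightarrow> bool" where
  "pc m p r \<longleftrightarrow> xm1 m dvd p - r"

lemma pc_refl[simp]: "pc m p p" by (simp add: pc_def)
lemma pc_sym: "pc m p r \<Longrightarrow> pc m r p"
  unfolding pc_def by (metis dvd_minus_iff minus_diff_eq)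
lemma pc_trans: "pc m p r \<Longrightarrow> pc m r s \<Longrightarrow> pc m p s"
proof -
  assume a: "pc m p r" "pc m r s"
  have "p - s = (p - r) + (r - s)" by simp
  then show ?thesis using a unfolding pc_def by (metis dvd_add)
qed
lemma pc_add: "pc m p r \<Longrightarrow> pc m p' r' \<Longrightarrow> pc m (p + p') (r + r')"
proof -
  assume a: "pc m p r" "pc m p' r'"
  have "(p + p') - (r + r') = (p - r) + (p' - r')" by simp
  then show ?thesis using a unfolding pc_def by (metis dvd_add)
qed
lemma pc_diff: "pc m p r \<Longrightarrow> pc m p' r' \<Longrightarrow> pc m (p - p') (r - r')"
proof -
  assume a: "pc m p r" "pc m p' r'"
  have "(p - p') - (r - r') = (p - r) - (p' - r')" by simp
  then show ?thesis using a unfolding pc_def by (metis dvd_diff)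
qed
lemma pc_uminus: "pc m p r \<Longrightarrow> pc m (- p) (- r)"
proof -
  assume a: "pc m p r"
  have "(- p) - (- r) = - (p - r)" by simp
  then show ?thesis using a unfolding pc_def by (metis dvd_minus_iff)
qed
lemma pc_mult: "pc m p r \<Longrightarrow> pc m p' r' \<Longrightarrow> pc m (p * p') (r * r')"
proof -
  assume a: "pc m p r" "pc m p' r'"
  have "p * p' - r * r' = (p - r) * p' + r * (p' - r')" by (simp add: algebra_simps)
  then show ?thesis using a unfolding pc_def by (simp add: dvd_add)
qed
lemma pc_multL: "pc m p r \<Longrightarrow> pc m (s * p) (s * r)" by (simp add: pc_mult)
lemma pc_multR: "pc m p r \<Longrightarrow> pc m (p * s) (r * s)" by (simp add: pc_mult)
lemma pc_smult: "pc m p r \<Longrightarrow> pc m (smult c p) (smult c r)"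
  unfolding pc_def by (metis smult_diff_right dvd_smult)
lemma pc_sum: "(\<And>i. i \<in> A \<Longrightarrow> pc m (f i) (g i)) \<Longrightarrow> pc m (sum f A) (sum g A)"
  by (induction A rule: infinite_finite_induct) (auto intro: pc_add)
lemma pc_iff_mod: "pc m p r \<longleftrightarrow> p mod xm1 m = r mod xm1 m"
  by (simp add: pc_def mod_eq_dvd_iff)
lemma pc_mod: "pc m p (p mod xm1 m)"
  by (simp add: pc_iff_mod)
lemma pc_rmod: "pc m p (rmod m p)"
  by (simp add: rmod_def pc_mod)
lemma pc_0_iff: "pc m p 0 \<longleftrightarrow> xm1 m dvd p" by (simp add: pc_def)
lemma pc_dvd: "pc m p r \<Longrightarrow> g dvd xm1 m \<Longrightarrow> g dvd p \<longleftrightarrow> g dvd r"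
proof -
  assume a: "pc m p r" "g dvd xm1 m"
  then have d: "g dvd p - r" unfolding pc_def using dvd_trans by blast
  have "r = p - (p - r)" "p = r + (p - r)" by simp_all
  then show ?thesis using d by (metis dvd_diff dvd_add)
qed

lemma xm1_ne0: "m > 0 \<Longrightarrow> xm1 m \<noteq> (0::'a::field_gcd poly)"
proof
  assume "m > 0" "xm1 m = (0::'a poly)"
  then have "coeff (xm1 m) m = (0::'a)" by simp
  with \<open>m > 0\<close> show False by (simp add: xm1_def coeff_monom)
qed

lemma degree_xm1: "m > 0 \<Longrightarrow> degree (xm1 m :: 'a::field_gcd poly) = m"
proof -
  assume m: "m > 0"
  have "xm1 m = monom 1 m + (- 1 :: 'a poly)" by (simp add: xm1_def)
  also have "degree \<dots> = m" using m by (subst degree_add_eq_left) (simp_all add: degree_monom_eq)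
  finally show ?thesis .
qed

lemma lead_coeff_xm1: "m > 0 \<Longrightarrow> lead_coeff (xm1 m :: 'a::field_gcd poly) = 1"
  by (simp add: degree_xm1) (simp add: xm1_def coeff_monom)

lemma coeff0_xm1: "m > 0 \<Longrightarrow> coeff (xm1 m :: 'a::field_gcd poly) 0 = -1"
  by (simp add: xm1_def coeff_monom)

lemma normalize_xm1: "m > 0 \<Longrightarrow> normalize (xm1 m :: 'a::field_gcd poly) = xm1 m"
  by (simp add: normalize_poly_eq_map_poly lead_coeff_xm1)

lemma degree_mod_xm1: "m > 0 \<Longrightarrow> degree (p mod xm1 m :: 'a::field_gcd poly) < m"
proof -
  assume m: "m > 0"
  have "degree (xm1 m :: 'a poly) = m" using degree_xm1[OF m] .
  then show ?thesis using degree_mod_less[OF xm1_ne0[OF m], of p] m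
    by (cases "p mod xm1 m = 0") auto
qed

lemma coeff_mod_xm1_ge: "m > 0 \<Longrightarrow> m \<le> i \<Longrightarrow> coeff (p mod xm1 m :: 'a::field_gcd poly) i = 0"
  using degree_mod_xm1[of m p] by (intro coeff_eq_0) simp

lemma mod_xm1_small: "m > 0 \<Longrightarrow> degree p < m \<Longrightarrow> p mod xm1 m = (p :: 'a::field_gcd poly)"
  by (rule mod_poly_less) (simp add: degree_xm1)

lemma rmod_small: "m > 0 \<Longrightarrow> degree p < m \<Longrightarrow> rmod m p = (p :: 'a::field_gcd poly)"
  by (simp add: rmod_def mod_xm1_small)

lemma pc_small_eq: "m > 0 \<Longrightarrow> pc m p r \<Longrightarrow> degree p < m \<Longrightarrow> degree r < m \<Longrightarrow> p = (r :: 'a::field_gcd poly)"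
  by (metis pc_iff_mod mod_xm1_small)

lemma xm1_dvd_monom_mult: "xm1 m dvd (monom 1 (m * t) - 1 :: 'a::field_gcd poly)"
proof -
  have "(monom 1 m :: 'a poly) ^ t - 1 = (monom 1 m - 1) * (\<Sum>i<t. monom 1 m ^ i)"
    by (rule power_diff_1_eq)
  moreover have "(monom 1 m :: 'a poly) ^ t = monom 1 (m * t)" by (simp add: monom_power)
  ultimately show ?thesis unfolding xm1_def by (metis dvd_triv_left)
qed

lemma pc_monom: "pc m (monom c n) (monom c (n mod m) :: 'a::field_gcd poly)"
proof -
  have "monom c n = monom c (n mod m) * (monom 1 (m * (n div m)) :: 'a poly)"
    by (simp add: mult_monom)
  then have "monom c n - monom c (n mod m) = monom c (n mod m) * (monom 1 (m * (n div m)) - 1 :: 'a poly)"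
    by (simp add: algebra_simps)
  then show ?thesis unfolding pc_def using xm1_dvd_monom_mult by (metis dvd_mult)
qed

lemma pc_monom': "n mod m = n' mod m \<Longrightarrow> pc m (monom c n) (monom c n' :: 'a::field_gcd poly)"
  by (metis pc_monom pc_sym pc_trans)

lemma pcompose_monom: "pcompose (monom c n) r = smult c (r ^ n)"
  by (induction n) (simp_all add: monom_0 monom_Suc pcompose_pCons)

lemma pc_pcompose2: "pc m r r' \<Longrightarrow> pc m (pcompose p r) (pcompose p r')"
  by (induction p) (simp_all add: pcompose_pCons pc_add pc_mult)

lemma pc_pcompose1:
  assumes "xm1 m dvd pcompose (xm1 m) r" "pc m p p'"
  shows "pc m (pcompose p r) (pcompose p' r)"
proof -
  obtain t where "p - p' = xm1 m * t" using assms(2) unfolding pc_def by blast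
  then have "pcompose p r - pcompose p' r = pcompose (xm1 m) r * pcompose t r"
    by (metis pcompose_diff pcompose_mult)
  then show ?thesis using assms(1) unfolding pc_def by simp
qed

lemma mod_add_inj:
  assumes "(i + k) mod m = (j + k) mod (m::nat)" "i < m" "j < m" shows "i = j"
proof -
  have "int ((i + k) mod m) = int ((j + k) mod m)" using assms(1) by simp
  then have "(int i + int k) mod int m = (int j + int k) mod int m" by (simp add: zmod_int)
  then have "int m dvd (int i + int k) - (int j + int k)" by (simp add: mod_eq_dvd_iff)
  then have "int m dvd int i - int j" by simp
  then obtain t where t: "int i - int j = int m * t" by blast
  have "t = 0"
  proof (rule ccontr)
    assume "t \<noteq> 0"
    then have "\<bar>t\<bar> \<ge> 1" by linarith
    then have "int m * \<bar>t\<bar> \<ge> int m" by (simp add: mult_le_cancel_left1)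
    moreover have "\<bar>int i - int j\<bar> = int m * \<bar>t\<bar>" using t by (simp add: abs_mult)
    ultimately show False using assms(2,3) by linarith
  qed
  then show ?thesis using t by simp
qed

lemma mod_refl_exp:
  assumes "i \<le> d" "m > (0::nat)" shows "(d + i * (m - 1)) mod m = (d - i) mod m"
proof -
  have "i * (m - 1) + i = i * m" using assms(2) by (simp add: diff_mult_distrib2)
  then have "d + i * (m - 1) = (d - i) + i * m" using assms(1) by linarith
  then show ?thesis by simp
qed

lemma mod_bar_exp:
  assumes "i < m" shows "(i * (m - 1)) mod m = (m - i) mod (m::nat)"
proof -
  have "(m + i * (m - 1)) mod m = (m - i) mod m" using assms by (intro mod_refl_exp) auto
  then show ?thesis by simp
qed

lemma mod_sq_exp:
  assumes "m > (0::nat)" shows "((m - 1) * (m - 1)) mod m = 1 mod m"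
  using mod_bar_exp[of "m - 1" m] assms by simp

lemma card_UNIV_zero: "of_nat (card (UNIV::'a::{finite,comm_ring_1} set)) = (0::'a)"
proof -
  have "(\<Sum>x\<in>(UNIV::'a set). x + 1) = (\<Sum>x\<in>UNIV. x)"
    by (rule sum.reindex_bij_witness[of _ "\<lambda>x. x - 1" "\<lambda>x. x + 1"]) auto
  then show ?thesis by (simp add: sum.distrib)
qed

lemma pow_card_self:
  fixes c :: "'a::{finite,field}"
  shows "c ^ card (UNIV::'a set) = c"
proof (cases "c = 0")
  case True
  have "card (UNIV::'a set) > 0" by (simp add: finite_UNIV_card_ge_0)
  then show ?thesis using True by (simp add: zero_power)
next
  case False
  let ?S = "UNIV - {0::'a}"
  have "prod (\<lambda>x. c * x) ?S = prod (\<lambda>x. x) ?S"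
  proof (rule prod.reindex_bij_witness[of _ "\<lambda>x. x / c" "\<lambda>x. c * x"])
    fix a assume "a \<in> ?S" then show "c * (a / c) = a" using False by simp
  next
    fix a assume "a \<in> ?S" then show "a / c \<in> ?S" using False by simp
  next
    fix a assume "a \<in> ?S" then show "c * a / c = a" using False by simp
  next
    fix a assume "a \<in> ?S" then show "c * a \<in> ?S" using False by simp
  qed simp
  moreover have "prod (\<lambda>x. c * x) ?S = c ^ card ?S * prod (\<lambda>x. x) ?S"
    by (simp add: prod.distrib)
  moreover have "prod (\<lambda>x. x) ?S \<noteq> 0" by simp
  ultimately have "c ^ card ?S = 1" by simp
  moreover have "card ?S = card (UNIV::'a set) - 1" by (simp add: card_Diff_singleton)
  moreover have "card (UNIV::'a set) > 0" by (simp add: finite_UNIV_card_ge_0)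
  ultimately have "card (UNIV::'a set) = Suc (card ?S)" by simp
  then show ?thesis using \<open>c ^ card ?S = 1\<close> by (simp only: power_Suc) simp
qed

lemma sum_monom_coeffs:
  assumes "degree (r::'a::field_gcd poly) < m"
  shows "(\<Sum>i<m. monom (coeff r i) i) = r"
proof (rule poly_eqI)
  fix n
  have "coeff (\<Sum>i<m. monom (coeff r i) i) n = (\<Sum>i<m. if i = n then coeff r i else 0)"
    by (simp add: coeff_sum coeff_monom)
  also have "\<dots> = (if n < m then coeff r n else 0)" by (simp add: sum.delta)
  also have "\<dots> = coeff r n" using assms by (auto simp: coeff_eq_0)
  finally show "coeff (\<Sum>i<m. monom (coeff r i) i) n = coeff r n" .
qed

lemma degree_sum_monoms_lt:
  assumes "m > 0" "finite A" "\<And>i. i \<in> A \<Longrightarrow> e i < m"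
  shows "degree (\<Sum>i\<in>A. monom (c i) (e i) :: 'a::field_gcd poly) < m"
proof -
  have "degree (\<Sum>i\<in>A. monom (c i) (e i) :: 'a poly) \<le> m - 1"
  proof (rule degree_sum_le[OF assms(2)])
    fix i assume "i \<in> A"
    then have "e i \<le> m - 1" using assms(3) by fastforce
    then show "degree (monom (c i) (e i) :: 'a poly) \<le> m - 1"
      using degree_monom_le order_trans by blast
  qed
  then show ?thesis using assms(1) by linarith
qed

lemma shift_mod:
  assumes "m > 0"
  shows "(monom 1 k * b) mod xm1 m
     = (\<Sum>i<m. monom (coeff (b mod xm1 m) i) ((i + k) mod m) :: 'a::field_gcd poly)"
proof -
  let ?r = "b mod xm1 m"
  let ?S = "(\<Sum>i<m. monom (coeff ?r i) ((i + k) mod m) :: 'a poly)"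
  have p1: "pc m (monom 1 k * b) (monom 1 k * ?r)" by (intro pc_multL pc_mod)
  have "monom 1 k * ?r = monom 1 k * (\<Sum>i<m. monom (coeff ?r i) i)"
    by (simp only: sum_monom_coeffs[OF degree_mod_xm1[OF assms, of b]])
  also have "\<dots> = (\<Sum>i<m. monom 1 k * monom (coeff ?r i) i)" by (rule sum_distrib_left)
  also have "\<dots> = (\<Sum>i<m. monom (coeff ?r i) (i + k))" by (simp add: mult_monom add.commute)
  finally have p2: "monom 1 k * ?r = (\<Sum>i<m. monom (coeff ?r i) (i + k))" .
  have p3: "pc m (\<Sum>i<m. monom (coeff ?r i) (i + k)) ?S"
    by (intro pc_sum pc_monom)
  have "pc m (monom 1 k * b) ?S" using pc_trans[OF p1 p3[folded p2]] .
  then have "(monom 1 k * b) mod xm1 m = ?S mod xm1 m" by (simp add: pc_iff_mod)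
  also have "?S mod xm1 m = ?S" using assms by (intro mod_xm1_small degree_sum_monoms_lt) auto
  finally show ?thesis .
qed

lemma coeff_shift:
  assumes "m > 0" "j < m"
  shows "coeff ((monom 1 k * b) mod xm1 m :: 'a::field_gcd poly) ((j + k) mod m) = coeff (b mod xm1 m) j"
proof -
  have "coeff ((monom 1 k * b) mod xm1 m :: 'a poly) ((j + k) mod m)
      = (\<Sum>i<m. if (i + k) mod m = (j + k) mod m then coeff (b mod xm1 m) i else 0)"
    by (simp add: shift_mod[OF assms(1)] coeff_sum coeff_monom)
  also have "\<dots> = (\<Sum>i<m. if i = j then coeff (b mod xm1 m) i else 0)"
  proof (rule sum.cong)
    fix i assume "i \<in> {..<m}"
    then have "(i + k) mod m = (j + k) mod m \<longleftrightarrow> i = j" using mod_add_inj[of i k m j] assms(2) by auto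
    then show "(if (i + k) mod m = (j + k) mod m then coeff (b mod xm1 m) i else 0)
             = (if i = j then coeff (b mod xm1 m) i else 0)" by simp
  qed simp
  also have "\<dots> = coeff (b mod xm1 m) j" using assms(2) by (simp add: sum.delta)
  finally show ?thesis .
qed

lemma mod_bar_exp': "i < m \<Longrightarrow> (i * (m - Suc 0)) mod m = (m - i) mod (m::nat)"
  using mod_bar_exp by simp
lemma mod_refl_exp': "i \<le> d \<Longrightarrow> m > (0::nat) \<Longrightarrow> (d + i * (m - Suc 0)) mod m = (d - i) mod m"
  using mod_refl_exp by simp

definition bar :: "nat \<Rightarrow> 'a::field_gcd poly \<Rightarrow> 'a poly" where
  "bar m p = pcompose p (monom 1 (m - 1))"

lemma xm1_dvd_bar_xm1: "xm1 m dvd pcompose (xm1 m) (monom 1 (m - 1) :: 'a::field_gcd poly)"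
proof -
  have "pcompose (xm1 m) (monom 1 (m - 1) :: 'a poly) = monom 1 (m * (m - 1)) - 1"
    by (simp add: xm1_def pcompose_diff pcompose_monom monom_power mult.commute pcompose_1)
  then show ?thesis using xm1_dvd_monom_mult by metis
qed

lemma pc_bar: "pc m p p' \<Longrightarrow> pc m (bar m p) (bar m p')"
  unfolding bar_def by (rule pc_pcompose1[OF xm1_dvd_bar_xm1])

lemma bar_add: "bar m (p + r) = bar m p + bar m r" by (simp add: bar_def pcompose_add)
lemma bar_diff: "bar m (p - r) = bar m p - bar m r" by (simp add: bar_def pcompose_diff)
lemma bar_mult: "bar m (p * r) = bar m p * bar m r" by (simp add: bar_def pcompose_mult)
lemma bar_1[simp]: "bar m 1 = 1" by (simp add: bar_def pcompose_1)
lemma bar_0[simp]: "bar m 0 = 0" by (simp add: bar_def)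
lemma bar_uminus: "bar m (- p) = - bar m p" by (simp add: bar_def pcompose_uminus)
lemma bar_sum: "bar m (sum f A) = (\<Sum>i\<in>A. bar m (f i))"
  by (induction A rule: infinite_finite_induct) (auto simp: bar_add)
lemma bar_monom: "bar m (monom c n) = monom c (n * (m - 1))"
  by (simp add: bar_def pcompose_monom monom_power smult_monom mult.commute)

lemma bar_bar: assumes "m > 0" shows "pc m (bar m (bar m p)) p"
proof -
  have "bar m (bar m p) = pcompose p (pcompose (monom 1 (m - 1)) (monom 1 (m - 1)))"
    by (simp add: bar_def pcompose_assoc)
  also have "pcompose (monom 1 (m - 1)) (monom 1 (m - 1)) = (monom 1 ((m - 1) * (m - 1)) :: 'a poly)"
    by (simp add: pcompose_monom monom_power)
  finally have e: "bar m (bar m p) = pcompose p (monom 1 ((m - 1) * (m - 1)))" .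
  have "pc m (monom 1 ((m - 1) * (m - 1))) (monom 1 1 :: 'a poly)"
    by (rule pc_monom') (use mod_sq_exp[OF assms] in simp)
  then have "pc m (pcompose p (monom 1 ((m - 1) * (m - 1)))) (pcompose p (monom 1 1))"
    by (rule pc_pcompose2)
  moreover have "(monom 1 1 :: 'a poly) = [:0, 1:]" by (simp add: monom_Suc monom_0 One_nat_def)
  ultimately show ?thesis using e by (simp add: pcompose_idR)
qed

lemma conjrev_bar:
  assumes "m > 0" shows "pc m (conjrev m k) (bar m k)"
proof -
  let ?r = "rmod m k"
  have dr: "degree ?r < m" using degree_mod_xm1[OF assms] by (simp add: rmod_def)
  have "bar m ?r = bar m (\<Sum>i<m. monom (coeff ?r i) i)" using sum_monom_coeffs[OF dr] by simp
  also have "\<dots> = (\<Sum>i<m. monom (coeff ?r i) (i * (m - 1)))" by (simp add: bar_sum bar_monom)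
  finally have e: "bar m ?r = (\<Sum>i<m. monom (coeff ?r i) (i * (m - 1)))" .
  have "pc m (\<Sum>i<m. monom (coeff ?r i) (i * (m - 1))) (conjrev m k)"
    unfolding conjrev_def by (intro pc_sum pc_monom') (simp add: mod_bar_exp')
  moreover have "pc m (bar m k) (bar m ?r)" by (intro pc_bar pc_rmod)
  ultimately show ?thesis using e by (metis pc_sym pc_trans)
qed

lemma reflect_as_sum:
  "reflect_poly f = (\<Sum>i\<le>degree f. monom (coeff f i) (degree f - i))"
proof (rule poly_eqI)
  fix n
  let ?d = "degree f"
  have "coeff (\<Sum>i\<le>?d. monom (coeff f i) (?d - i)) n = (\<Sum>i\<le>?d. if i = ?d - n \<and> n \<le> ?d then coeff f i else 0)"
    unfolding coeff_sum coeff_monom by (rule sum.cong) auto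
  also have "\<dots> = (if n \<le> ?d then coeff f (?d - n) else 0)"
    by (cases "n \<le> ?d") (simp_all add: sum.delta)
  finally show "coeff (reflect_poly f) n = coeff (\<Sum>i\<le>?d. monom (coeff f i) (?d - i)) n"
    by (simp add: coeff_reflect_poly not_less)
qed

lemma reflect_bar:
  assumes "m > 0"
  shows "pc m (reflect_poly f) (monom 1 (degree f) * bar m f)"
proof -
  let ?d = "degree f"
  have "bar m f = bar m (\<Sum>i\<le>?d. monom (coeff f i) i)" by (simp add: poly_as_sum_of_monoms)
  also have "\<dots> = (\<Sum>i\<le>?d. monom (coeff f i) (i * (m - 1)))" by (simp add: bar_sum bar_monom)
  finally have "monom 1 ?d * bar m f = (\<Sum>i\<le>?d. monom (coeff f i) (?d + i * (m - 1)))"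
    by (simp add: sum_distrib_left mult_monom)
  moreover have "pc m (\<Sum>i\<le>?d. monom (coeff f i) (?d + i * (m - 1))) (reflect_poly f)"
    unfolding reflect_as_sum by (intro pc_sum pc_monom') (simp add: mod_refl_exp' assms)
  ultimately show ?thesis by (simp add: pc_sym)
qed

definition tr :: "nat \<Rightarrow> 'a::field_gcd poly \<Rightarrow> 'a" where
  "tr m p = coeff (p mod xm1 m) 0"

lemma tr_0[simp]: "tr m 0 = 0" by (simp add: tr_def)
lemma tr_add: "tr m (p + r) = tr m p + tr m r" by (simp add: tr_def poly_mod_add_left)
lemma tr_smult: "tr m (smult c p) = c * tr m p" by (simp add: tr_def mod_smult_left)
lemma tr_sum: "tr m (sum f A) = (\<Sum>i\<in>A. tr m (f i))"
  by (induction A rule: infinite_finite_induct) (simp_all add: tr_add tr_0)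
lemma tr_pc: "pc m p r \<Longrightarrow> tr m p = tr m r" by (simp add: tr_def pc_iff_mod)

lemma tr_shift:
  assumes "m > 0" "i < m"
  shows "tr m (monom 1 ((m - i) mod m) * b) = coeff (b mod xm1 m) i"
proof -
  have "(i + (m - i) mod m) mod m = (i + (m - i)) mod m" by (rule mod_add_right_eq)
  also have "i + (m - i) = m" using assms(2) by simp
  finally have "(i + (m - i) mod m) mod m = 0" by simp
  then show ?thesis using coeff_shift[OF assms, of "(m - i) mod m" b] by (simp add: tr_def)
qed

lemma monom_mult_eq: "monom c e * (b::'a::field_gcd poly) = smult c (monom 1 e * b)"
proof -
  have "monom c e * b = smult c (monom 1 e) * b" by (simp add: smult_monom)
  also have "\<dots> = smult c (monom 1 e * b)" by (rule mult_smult_left)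
  finally show ?thesis .
qed

lemma pairing:
  assumes "m > 0" "degree s < m"
  shows "tr m (conjrev m s * b) = (\<Sum>i<m. coeff s i * coeff (b mod xm1 m) i)"
proof -
  have "conjrev m s * b = (\<Sum>i<m. smult (coeff s i) (monom 1 ((m - i) mod m) * b))"
    unfolding conjrev_def rmod_small[OF assms] sum_distrib_right
    by (intro sum.cong refl monom_mult_eq)
  then show ?thesis by (simp add: tr_sum tr_smult tr_shift assms(1))
qed

lemma tr_nondeg:
  assumes "m > 0" "\<And>r. tr m (r * P) = 0"
  shows "xm1 m dvd (P :: 'a::field_gcd poly)"
proof -
  have "P mod xm1 m = 0"
  proof (rule poly_eqI)
    fix j
    show "coeff (P mod xm1 m) j = coeff 0 j"
    proof (cases "j < m")
      case True
      have "coeff (P mod xm1 m) j = tr m (monom 1 ((m - j) mod m) * P)"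
        by (rule tr_shift[OF assms(1) True, symmetric])
      then show ?thesis using assms(2) by simp
    next
      case False
      then have mj: "m \<le> j" by simp
      show ?thesis using coeff_mod_xm1_ge[OF assms(1) mj, of P] by simp
    qed
  qed
  then show ?thesis by (simp add: mod_eq_0_iff_dvd)
qed

locale frobsetup =
  fixes q :: nat and dummy :: "'a::{finite,field_gcd} itself"
  assumes pp: "prime_power q" and cardq: "card (UNIV :: 'a set) = q ^ 2"
begin

definition sig :: "'a \<Rightarrow> 'a" where "sig c = c ^ q"

lemma CHAR_eq: "\<exists>k. q = CHAR('a) ^ k"
proof -
  obtain p k where p: "prime p" "k > 0" "q = p ^ k" using pp unfolding prime_power_def by blast
  have pc: "prime CHAR('a)"
    by (rule prime_CHAR_semidom) (simp add: finite_imp_CHAR_pos)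
  have "CHAR('a) dvd card (UNIV::'a set)"
    using card_UNIV_zero[where 'a='a] of_nat_eq_0_iff_char_dvd by blast
  moreover have "card (UNIV::'a set) = p ^ (k*2)" using cardq p by (metis power_mult)
  ultimately have "CHAR('a) dvd p ^ (k*2)" by simp
  then have "CHAR('a) dvd p" using pc prime_dvd_power by blast
  then have "CHAR('a) = p" using pc p(1) by (simp add: primes_dvd_imp_eq)
  then show ?thesis using p by blast
qed

lemma sig_add: "sig (x + y) = sig x + sig y"
proof -
  obtain k where "q = CHAR('a) ^ k" using CHAR_eq by blast
  moreover have pc: "prime CHAR('a)"
    by (rule prime_CHAR_semidom) (simp add: finite_imp_CHAR_pos)
  ultimately show ?thesis unfolding sig_def using freshmans_dream' by blast
qed

lemma q_pos: "q > 0"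
  using pp unfolding prime_power_def by (auto simp: prime_gt_0_nat)

lemma sig_0[simp]: "sig 0 = 0" using q_pos by (simp add: sig_def)
lemma sig_1[simp]: "sig 1 = 1" by (simp add: sig_def)
lemma sig_mult: "sig (x * y) = sig x * sig y" by (simp add: sig_def power_mult_distrib)
lemma sig_uminus: "sig (- x) = - sig x"
  using sig_add[of x "-x"] by (simp add: eq_neg_iff_add_eq_0 add.commute)
lemma sig_diff: "sig (x - y) = sig x - sig y"
  using sig_add[of x "-y"] by (simp add: sig_uminus)
lemma sig_sig[simp]: "sig (sig x) = x"
  unfolding sig_def using pow_card_self[of x] cardq
  by (simp add: power_mult[symmetric] power2_eq_square)
lemma sig_inverse: "sig (inverse x) = inverse (sig x)"
  by (simp add: sig_def power_inverse)
lemma sig_eq_0_iff[simp]: "sig x = 0 \<longleftrightarrow> x = 0"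
  by (metis sig_0 sig_sig)


definition fp :: "'a poly \<Rightarrow> 'a poly" where "fp p = map_poly sig p"

lemma coeff_fp[simp]: "coeff (fp p) i = sig (coeff p i)"
  by (simp add: fp_def coeff_map_poly)

lemma sig_sum: "sig (sum f A) = sum (\<lambda>i. sig (f i)) A"
  by (induction A rule: infinite_finite_induct) (auto simp: sig_add)

lemma fp_add: "fp (p + r) = fp p + fp r"
  by (rule poly_eqI) (simp add: sig_add)
lemma fp_diff: "fp (p - r) = fp p - fp r"
  by (rule poly_eqI) (simp add: sig_diff)
lemma fp_uminus: "fp (- p) = - fp p"
  by (rule poly_eqI) (simp add: sig_uminus)
lemma fp_0[simp]: "fp 0 = 0"
  by (rule poly_eqI) simp
lemma fp_1[simp]: "fp 1 = 1"
  by (rule poly_eqI) (simp add: coeff_1)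
lemma fp_monom: "fp (monom c n) = monom (sig c) n"
  by (rule poly_eqI) (simp add: coeff_monom)
lemma fp_smult: "fp (smult c p) = smult (sig c) (fp p)"
  by (rule poly_eqI) (simp add: sig_mult)
lemma fp_mult: "fp (p * r) = fp p * fp r"
  by (rule poly_eqI) (simp add: coeff_mult sig_sum sig_mult)
lemma fp_fp[simp]: "fp (fp p) = p"
  by (rule poly_eqI) simp
lemma fp_sum: "fp (sum f A) = sum (\<lambda>i. fp (f i)) A"
  by (induction A rule: infinite_finite_induct) (auto simp: fp_add)
lemma fp_pCons: "fp (pCons c p) = pCons (sig c) (fp p)"
  by (simp add: fp_def map_poly_pCons)
lemma fp_pcompose: "fp (pcompose p r) = pcompose (fp p) (fp r)"
  by (induction p) (simp_all add: pcompose_pCons fp_pCons fp_add fp_mult)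
lemma fp_eq_0_iff[simp]: "fp p = 0 \<longleftrightarrow> p = 0"
  by (metis fp_0 fp_fp)
lemma degree_fp[simp]: "degree (fp p) = degree p"
  by (simp add: fp_def degree_map_poly)
lemma fp_xm1[simp]: "fp (xm1 m) = xm1 m"
  by (simp add: xm1_def fp_diff fp_monom)
lemma fp_dvd: "a dvd b \<Longrightarrow> fp a dvd fp b"
  by (metis dvd_def fp_mult)
lemma fp_dvd_iff: "fp a dvd fp b \<longleftrightarrow> a dvd b"
  by (metis fp_dvd fp_fp)
lemma lead_coeff_fp: "lead_coeff (fp p) = sig (lead_coeff p)"
  by simp
end

lemma normalize_monic': "lead_coeff p = 1 \<Longrightarrow> normalize p = (p::'a::field_gcd poly)"
  by (simp add: normalize_poly_eq_map_poly)

lemma monic_dvd_xm1_eq: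
  assumes m: "m > 0" and g: "lead_coeff g = 1" "g dvd xm1 m" "\<not> degree g < m"
  shows "g = (xm1 m :: 'a::field_gcd poly)"
proof -
  obtain k where k: "xm1 m = g * k" using g(2) by (elim dvdE)
  have X0: "xm1 m \<noteq> (0::'a poly)" using xm1_ne0[OF m] .
  then have k0: "k \<noteq> 0" and g0: "g \<noteq> 0" using k by auto
  have "degree (xm1 m :: 'a poly) = degree g + degree k" using k k0 g0 by (simp add: degree_mult_eq)
  then have dk: "degree k = 0" using degree_xm1[OF m, where 'a='a] g(3) by linarith
  have "lead_coeff (xm1 m :: 'a poly) = lead_coeff g * lead_coeff k" using k by (simp add: lead_coeff_mult)
  then have "lead_coeff k = 1" using lead_coeff_xm1[OF m, where 'a='a] g(1) by simp
  then have "k = 1"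
    by (intro poly_eqI) (use dk in \<open>auto simp: coeff_1 intro: coeff_eq_0\<close>)
  then show ?thesis using k by simp
qed

lemma ann:
  assumes "xm1 m = g * h" "g \<noteq> 0"
  shows "xm1 m dvd y * g \<longleftrightarrow> h dvd (y :: 'a::field_gcd poly)"
  using assms by (simp add: mult.commute dvd_times_left_cancel_iff)

lemma ann2:
  assumes "xm1 m = g * h" "h \<noteq> 0"
  shows "g dvd y \<longleftrightarrow> xm1 m dvd h * (y :: 'a::field_gcd poly)"
  using assms by (simp add: mult.commute dvd_times_left_cancel_iff)

lemma cancel_unit:
  assumes "pc m (U * V) 1" "g dvd xm1 m" "g dvd V * y"
  shows "g dvd (y :: 'a::field_gcd poly)"
proof -
  have "g dvd U * (V * y)" using assms(3) by simp
  moreover have "pc m (U * (V * y)) y" using pc_multR[OF assms(1), of y] by (simp add: mult.assoc)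
  ultimately show ?thesis using pc_dvd assms(2) by blast
qed

lemma monom_unit:
  assumes "g dvd xm1 m" "m > 0"
  shows "g dvd monom 1 d * y \<longleftrightarrow> g dvd (y :: 'a::field_gcd poly)"
proof
  assume "g dvd y" then show "g dvd monom 1 d * y" by simp
next
  assume h: "g dvd monom 1 d * y"
  have "pc m (monom 1 (d * (m - 1)) * monom 1 d) (1 :: 'a poly)"
  proof -
    have "d * (m - 1) + d = m * d" using assms(2) by (simp add: algebra_simps diff_mult_distrib2)
    then have "monom 1 (d * (m - 1)) * monom 1 d = (monom 1 (m * d) :: 'a poly)" by (simp add: mult_monom)
    then show ?thesis unfolding pc_def using xm1_dvd_monom_mult by metis
  qed
  then show "g dvd y" using cancel_unit[OF _ assms(1) h] by blast
qed

context frobsetup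
begin

definition cj :: "nat \<Rightarrow> 'a poly \<Rightarrow> 'a poly" where "cj m p = bar m (fp p)"

lemma fp_bar: "fp (bar m p) = bar m (fp p)" by (simp add: bar_def fp_pcompose fp_monom)
lemma cj_add: "cj m (p + r) = cj m p + cj m r" by (simp add: cj_def fp_add bar_add)
lemma cj_diff: "cj m (p - r) = cj m p - cj m r" by (simp add: cj_def fp_diff bar_diff)
lemma cj_mult: "cj m (p * r) = cj m p * cj m r" by (simp add: cj_def fp_mult bar_mult)
lemma cj_uminus: "cj m (- p) = - cj m p" by (simp add: cj_def fp_uminus bar_uminus)
lemma cj_1[simp]: "cj m 1 = 1" by (simp add: cj_def)
lemma cj_0[simp]: "cj m 0 = 0" by (simp add: cj_def)

lemma pc_fp: "pc m p r \<Longrightarrow> pc m (fp p) (fp r)"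
  unfolding pc_def by (metis fp_dvd fp_diff fp_xm1)
lemma pc_cj: "pc m p r \<Longrightarrow> pc m (cj m p) (cj m r)"
  by (simp add: cj_def pc_bar pc_fp)
lemma cj_cj: "m > 0 \<Longrightarrow> pc m (cj m (cj m p)) p"
  by (simp add: cj_def fp_bar bar_bar)

lemma frob_eq: "frob q m k = fp (rmod m k)"
  by (simp add: frob_def fp_def sig_def[abs_def])

lemma frob_conjrev: assumes "m > 0" shows "pc m (frob q m (conjrev m v)) (cj m v)"
proof -
  have "pc m (rmod m (conjrev m v)) (bar m v)" using pc_trans[OF pc_sym[OF pc_rmod] conjrev_bar[OF assms]] .
  then have "pc m (fp (rmod m (conjrev m v))) (fp (bar m v))" by (rule pc_fp)
  then show ?thesis by (simp add: frob_eq fp_bar cj_def)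
qed

lemma perpH_eq:
  assumes m: "m > 0" and g: "lead_coeff g = 1" "g dvd xm1 m"
  shows "perpH q m g = smult (inverse (coeff (fp (xm1 m div g)) 0)) (reflect_poly (fp (xm1 m div g)))"
    and "coeff (fp (xm1 m div g)) 0 \<noteq> 0"
proof -
  let ?X = "xm1 m :: 'a poly"
  let ?h = "?X div g"
  have Xgh: "?X = g * ?h" using g(2) by simp
  have g0: "g \<noteq> 0" using g(1) by auto
  have fg0: "fp g \<noteq> 0" using g0 by simp
  have fXgh: "?X = fp g * fp ?h" using arg_cong[OF Xgh, of fp] by (simp add: fp_mult)
  have lfg: "lead_coeff (fp g) = 1" using g(1) by simp
  have gcd_eq: "gcd (rmod m (frob q m g)) ?X = fp g"
  proof (cases "degree g < m")
    case True
    have "rmod m (frob q m g) = fp g"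
      using True m by (simp add: frob_eq rmod_small)
    moreover have "fp g dvd ?X" using fXgh by (metis dvd_triv_left)
    ultimately show ?thesis using normalize_monic'[OF lfg] by (simp add: gcd_proj1_if_dvd)
  next
    case False
    then have gX: "g = ?X" using monic_dvd_xm1_eq[OF m g] by simp
    have "rmod m (frob q m g) = 0" using gX by (simp add: frob_eq rmod_def)
    then show ?thesis using gX by (simp add: normalize_xm1[OF m])
  qed
  have div_eq: "?X div fp g = fp ?h" using fXgh fg0 by (metis nonzero_mult_div_cancel_left)
  show "perpH q m g = smult (inverse (coeff (fp ?h) 0)) (reflect_poly (fp ?h))"
    unfolding perpH_def perp_def Let_def gcd_eq div_eq ..
  have "coeff ?X 0 = coeff (fp g) 0 * coeff (fp ?h) 0" using fXgh by (metis coeff_mult_0)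
  then show "coeff (fp ?h) 0 \<noteq> 0" using coeff0_xm1[OF m, where 'a='a] by auto
qed

lemma perpH_dvd:
  assumes m: "m > 0" and g': "lead_coeff g' = 1" "g' dvd xm1 m" and g: "g dvd xm1 m"
  shows "g dvd rmod m (perpH q m g' * e) \<longleftrightarrow> g dvd cj m (xm1 m div g') * e"
proof -
  let ?f = "fp (xm1 m div g')"
  let ?c = "inverse (coeff ?f 0)"
  have c0: "?c \<noteq> 0" using perpH_eq(2)[OF m g'] by simp
  have "pc m (perpH q m g') (smult ?c (monom 1 (degree ?f) * bar m ?f))"
    unfolding perpH_eq(1)[OF m g'] by (intro pc_smult reflect_bar m)
  then have "pc m (perpH q m g' * e) (smult ?c (monom 1 (degree ?f) * (cj m (xm1 m div g') * e)))"
    using pc_multR by (fastforce simp: cj_def mult.assoc)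
  then have "pc m (rmod m (perpH q m g' * e)) (smult ?c (monom 1 (degree ?f) * (cj m (xm1 m div g') * e)))"
    using pc_trans[OF pc_sym[OF pc_rmod]] by blast
  then have "g dvd rmod m (perpH q m g' * e) \<longleftrightarrow> g dvd smult ?c (monom 1 (degree ?f) * (cj m (xm1 m div g') * e))"
    using pc_dvd[OF _ g] by blast
  also have "\<dots> \<longleftrightarrow> g dvd monom 1 (degree ?f) * (cj m (xm1 m div g') * e)" using c0 by (simp add: dvd_smult_iff)
  also have "\<dots> \<longleftrightarrow> g dvd cj m (xm1 m div g') * e" by (rule monom_unit[OF g m])
  finally show ?thesis .
qed

end


context frobsetup
begin

lemma dc_iff:
  assumes m: "m > 0"
    and g1: "lead_coeff g1 = 1" "g1 dvd xm1 m" and g2: "lead_coeff g2 = 1" "g2 dvd xm1 m"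
    and Dv: "pc m (Dinv * (1 - v * v)) 1"
    and h1: "h1 = xm1 m div g1" and h2: "h2 = xm1 m div g2"
    and w: "w = cj m v" and e1: "e1 = 1 + v * w" and e2: "e2 = w + v"
  shows "(\<forall>a1 a2. degree a1 < m \<longrightarrow> degree a2 < m \<longrightarrow>
            xm1 m dvd (cj m a1 + v * cj m a2) * g1 \<longrightarrow>
            xm1 m dvd (v * cj m a1 + cj m a2) * g2 \<longrightarrow>
            g1 dvd a1 - v * a2 \<and> g2 dvd a2 - v * a1)
     \<longleftrightarrow> (g1 dvd cj m h1 * e1 \<and> g1 dvd cj m h2 * e2 \<and> g2 dvd cj m h2 * e1)"
proof -
  have X0: "xm1 m \<noteq> (0::'a poly)" using xm1_ne0[OF m] .
  have X1: "xm1 m = g1 * h1" using g1(2) h1 by simp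
  have X2: "xm1 m = g2 * h2" using g2(2) h2 by simp
  have g10: "g1 \<noteq> 0" using g1(1) by auto
  have g20: "g2 \<noteq> 0" using g2(1) by auto
  have h10: "h1 \<noteq> 0" using X1 X0 by auto
  have h20: "h2 \<noteq> 0" using X2 X0 by auto
  define K where "K = cj m Dinv"
  have "pc m (cj m (Dinv * (1 - v * v))) (cj m 1)" by (rule pc_cj[OF Dv])
  moreover have "cj m (Dinv * (1 - v * v)) = K * (1 - w * w)"
    by (simp add: K_def w cj_mult cj_diff)
  ultimately have KD1: "pc m (K * (1 - w * w)) 1" by simp
  then have KD2: "pc m ((1 - w * w) * K) 1" by (simp add: mult.commute)
  have cjw: "pc m (cj m w) v" using cj_cj[OF m] w by simp
  have sym: "g2 dvd cj m h1 * e2" if a: "g1 dvd cj m h2 * e2"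
  proof -
    have "xm1 m dvd h1 * (cj m h2 * e2)" using a ann2[OF X1 h10] by simp
    then have "pc m (h1 * (cj m h2 * e2)) 0" by (simp add: pc_0_iff)
    then have c0: "pc m (cj m (h1 * (cj m h2 * e2))) 0" using pc_cj by fastforce
    have "cj m (h1 * (cj m h2 * e2)) = cj m h1 * (cj m (cj m h2) * (cj m w + w))"
      by (simp add: cj_mult cj_add e2 w)
    moreover have "pc m (cj m h1 * (cj m (cj m h2) * (cj m w + w))) (cj m h1 * (h2 * (v + w)))"
      by (intro pc_mult pc_refl pc_add cj_cj[OF m] cjw)
    ultimately have "pc m (cj m h1 * (h2 * (v + w))) 0" using c0 by (metis pc_sym pc_trans)
    moreover have "cj m h1 * (h2 * (v + w)) = h2 * (cj m h1 * e2)" by (simp add: e2 algebra_simps)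
    ultimately have "xm1 m dvd h2 * (cj m h1 * e2)" by (simp add: pc_0_iff)
    then show ?thesis using ann2[OF X2 h20] by simp
  qed
  have rcj: "pc m (cj m (rmod m (cj m c))) c" for c
    using pc_trans[OF pc_cj[OF pc_sym[OF pc_rmod]] cj_cj[OF m]] .
  have drm: "degree (rmod m p) < m" for p :: "'a poly"
    using degree_mod_xm1[OF m] by (simp add: rmod_def)
  show ?thesis
  proof
    assume DC: "\<forall>a1 a2. degree a1 < m \<longrightarrow> degree a2 < m \<longrightarrow>
            xm1 m dvd (cj m a1 + v * cj m a2) * g1 \<longrightarrow>
            xm1 m dvd (v * cj m a1 + cj m a2) * g2 \<longrightarrow>
            g1 dvd a1 - v * a2 \<and> g2 dvd a2 - v * a1"
    have c1: "g1 dvd cj m h1 * e1"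
    proof -
      define c1 where "c1 = Dinv * h1"
      define c2 where "c2 = - (v * Dinv * h1)"
      define a1 where "a1 = rmod m (cj m c1)"
      define a2 where "a2 = rmod m (cj m c2)"
      have p1: "pc m ((cj m a1 + v * cj m a2) * g1) ((c1 + v * c2) * g1)"
        unfolding a1_def a2_def by (intro pc_mult pc_add pc_refl rcj)
      have "(c1 + v * c2) * g1 = (Dinv * (1 - v * v)) * xm1 m"
        by (simp add: c1_def c2_def X1 algebra_simps)
      then have A1: "xm1 m dvd (cj m a1 + v * cj m a2) * g1"
        using pc_dvd[OF p1 dvd_refl] by simp
      have p2: "pc m ((v * cj m a1 + cj m a2) * g2) ((v * c1 + c2) * g2)"
        unfolding a1_def a2_def by (intro pc_mult pc_add pc_refl rcj)
      have z: "(v * c1 + c2) * g2 = 0"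
        by (simp add: c1_def c2_def algebra_simps)
      have "xm1 m dvd (v * c1 + c2) * g2" unfolding z by (rule dvd_0_right)
      then have A2: "xm1 m dvd (v * cj m a1 + cj m a2) * g2"
        using pc_dvd[OF p2 dvd_refl] by blast
      have "g1 dvd a1 - v * a2" using DC drm A1 A2 unfolding a1_def a2_def by blast
      moreover have "pc m (a1 - v * a2) (cj m c1 - v * cj m c2)"
        unfolding a1_def a2_def by (intro pc_diff pc_mult pc_refl pc_sym[OF pc_rmod])
      moreover have "cj m c1 - v * cj m c2 = K * (cj m h1 * e1)"
      proof -
        have "cj m c2 = - (w * K * cj m h1)" by (simp add: c2_def K_def w cj_mult cj_uminus)
        moreover have "cj m c1 = K * cj m h1" by (simp add: c1_def K_def cj_mult)
        ultimately show ?thesis by (simp add: e1 algebra_simps)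
      qed
      ultimately have "g1 dvd K * (cj m h1 * e1)" using pc_dvd[OF _ g1(2)] by metis
      then show ?thesis using cancel_unit[OF KD2 g1(2)] by blast
    qed
    have c23: "g1 dvd cj m h2 * e2 \<and> g2 dvd cj m h2 * e1"
    proof -
      define c1 where "c1 = - (v * Dinv * h2)"
      define c2 where "c2 = Dinv * h2"
      define a1 where "a1 = rmod m (cj m c1)"
      define a2 where "a2 = rmod m (cj m c2)"
      have p1: "pc m ((cj m a1 + v * cj m a2) * g1) ((c1 + v * c2) * g1)"
        unfolding a1_def a2_def by (intro pc_mult pc_add pc_refl rcj)
      have z: "(c1 + v * c2) * g1 = 0"
        by (simp add: c1_def c2_def algebra_simps)
      have "xm1 m dvd (c1 + v * c2) * g1" unfolding z by (rule dvd_0_right)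
      then have A1: "xm1 m dvd (cj m a1 + v * cj m a2) * g1"
        using pc_dvd[OF p1 dvd_refl] by blast
      have p2: "pc m ((v * cj m a1 + cj m a2) * g2) ((v * c1 + c2) * g2)"
        unfolding a1_def a2_def by (intro pc_mult pc_add pc_refl rcj)
      have "(v * c1 + c2) * g2 = (Dinv * (1 - v * v)) * xm1 m"
        by (simp add: c1_def c2_def X2 algebra_simps)
      then have A2: "xm1 m dvd (v * cj m a1 + cj m a2) * g2"
        using pc_dvd[OF p2 dvd_refl] by simp
      have "degree a1 < m" "degree a2 < m" unfolding a1_def a2_def by (rule drm)+
      then have D12: "g1 dvd a1 - v * a2 \<and> g2 dvd a2 - v * a1" using DC A1 A2 by blast
      then have D1: "g1 dvd a1 - v * a2" and D2: "g2 dvd a2 - v * a1" by auto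
      have "pc m (a1 - v * a2) (cj m c1 - v * cj m c2)"
        unfolding a1_def a2_def by (intro pc_diff pc_mult pc_refl pc_sym[OF pc_rmod])
      moreover have "cj m c1 - v * cj m c2 = - (K * (cj m h2 * e2))"
      proof -
        have "cj m c1 = - (w * K * cj m h2)" by (simp add: c1_def K_def w cj_mult cj_uminus)
        moreover have "cj m c2 = K * cj m h2" by (simp add: c2_def K_def cj_mult)
        ultimately show ?thesis by (simp add: e2 algebra_simps)
      qed
      ultimately have "g1 dvd - (K * (cj m h2 * e2))" using D1 pc_dvd[OF _ g1(2)] by metis
      then have "g1 dvd K * (cj m h2 * e2)" by (simp only: dvd_minus_iff)
      then have r1: "g1 dvd cj m h2 * e2" using cancel_unit[OF KD2 g1(2)] by blast
      have "pc m (a2 - v * a1) (cj m c2 - v * cj m c1)"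
        unfolding a1_def a2_def by (intro pc_diff pc_mult pc_refl pc_sym[OF pc_rmod])
      moreover have "cj m c2 - v * cj m c1 = K * (cj m h2 * e1)"
      proof -
        have "cj m c1 = - (w * K * cj m h2)" by (simp add: c1_def K_def w cj_mult cj_uminus)
        moreover have "cj m c2 = K * cj m h2" by (simp add: c2_def K_def cj_mult)
        ultimately show ?thesis by (simp add: e1 algebra_simps)
      qed
      ultimately have "g2 dvd K * (cj m h2 * e1)" using D2 pc_dvd[OF _ g2(2)] by metis
      then have r2: "g2 dvd cj m h2 * e1" using cancel_unit[OF KD2 g2(2)] by blast
      show ?thesis using r1 r2 by simp
    qed
    show "g1 dvd cj m h1 * e1 \<and> g1 dvd cj m h2 * e2 \<and> g2 dvd cj m h2 * e1"
      using c1 c23 by simp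
  next
    assume C: "g1 dvd cj m h1 * e1 \<and> g1 dvd cj m h2 * e2 \<and> g2 dvd cj m h2 * e1"
    have C4: "g2 dvd cj m h1 * e2" using sym C by blast
    show "\<forall>a1 a2. degree a1 < m \<longrightarrow> degree a2 < m \<longrightarrow>
            xm1 m dvd (cj m a1 + v * cj m a2) * g1 \<longrightarrow>
            xm1 m dvd (v * cj m a1 + cj m a2) * g2 \<longrightarrow>
            g1 dvd a1 - v * a2 \<and> g2 dvd a2 - v * a1"
    proof (intro allI impI)
      fix a1 a2 :: "'a poly"
      assume A1: "xm1 m dvd (cj m a1 + v * cj m a2) * g1"
        and A2: "xm1 m dvd (v * cj m a1 + cj m a2) * g2"
      obtain \<alpha> where al: "cj m a1 + v * cj m a2 = h1 * \<alpha>"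
        using A1 ann[OF X1 g10] by (auto elim: dvdE)
      obtain \<beta> where be: "v * cj m a1 + cj m a2 = h2 * \<beta>"
        using A2 ann[OF X2 g20] by (auto elim: dvdE)
      have "cj m (cj m a1 + v * cj m a2) = cj m (h1 * \<alpha>)" using al by simp
      then have al': "cj m (cj m a1) + w * cj m (cj m a2) = cj m h1 * cj m \<alpha>"
        by (simp add: cj_add cj_mult w)
      have "cj m (v * cj m a1 + cj m a2) = cj m (h2 * \<beta>)" using be by simp
      then have be': "w * cj m (cj m a1) + cj m (cj m a2) = cj m h2 * cj m \<beta>"
        by (simp add: cj_add cj_mult w)
      have P: "pc m (a1 + w * a2) (cj m h1 * cj m \<alpha>)"
        unfolding al'[symmetric] by (intro pc_add pc_mult pc_refl pc_sym[OF cj_cj[OF m]])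
      have Q: "pc m (w * a1 + a2) (cj m h2 * cj m \<beta>)"
        unfolding be'[symmetric] by (intro pc_add pc_mult pc_refl pc_sym[OF cj_cj[OF m]])
      have id1: "(1 - w * w) * (a1 - v * a2) = (a1 + w * a2) * e1 - (w * a1 + a2) * e2"
        by (simp add: e1 e2 algebra_simps)
      have id2: "(1 - w * w) * (a2 - v * a1) = (w * a1 + a2) * e1 - (a1 + w * a2) * e2"
        by (simp add: e1 e2 algebra_simps)
      have pc1: "pc m ((1 - w * w) * (a1 - v * a2))
                  (cj m \<alpha> * (cj m h1 * e1) - cj m \<beta> * (cj m h2 * e2))"
      proof -
        have "pc m ((a1 + w * a2) * e1 - (w * a1 + a2) * e2)
                  ((cj m h1 * cj m \<alpha>) * e1 - (cj m h2 * cj m \<beta>) * e2)"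
          by (intro pc_diff pc_multR P Q)
        then show ?thesis unfolding id1 by (simp add: ac_simps)
      qed
      have pc2: "pc m ((1 - w * w) * (a2 - v * a1))
                  (cj m \<beta> * (cj m h2 * e1) - cj m \<alpha> * (cj m h1 * e2))"
      proof -
        have "pc m ((w * a1 + a2) * e1 - (a1 + w * a2) * e2)
                  ((cj m h2 * cj m \<beta>) * e1 - (cj m h1 * cj m \<alpha>) * e2)"
          by (intro pc_diff pc_multR P Q)
        then show ?thesis unfolding id2 by (simp add: ac_simps)
      qed
      have "g1 dvd cj m \<alpha> * (cj m h1 * e1) - cj m \<beta> * (cj m h2 * e2)"
        using C by (meson dvd_diff dvd_mult)
      then have "g1 dvd (1 - w * w) * (a1 - v * a2)" using pc_dvd[OF pc1 g1(2)] by simp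
      then have r1: "g1 dvd a1 - v * a2" using cancel_unit[OF KD1 g1(2)] by blast
      have "g2 dvd cj m \<beta> * (cj m h2 * e1) - cj m \<alpha> * (cj m h1 * e2)"
        using C C4 by (meson dvd_diff dvd_mult)
      then have "g2 dvd (1 - w * w) * (a2 - v * a1)" using pc_dvd[OF pc2 g2(2)] by simp
      then have r2: "g2 dvd a2 - v * a1" using cancel_unit[OF KD1 g2(2)] by blast
      show "g1 dvd a1 - v * a2 \<and> g2 dvd a2 - v * a1" using r1 r2 by simp
    qed
  qed
qed

end


lemma length_cvec[simp]: "length (cvec m p) = m" by (simp add: cvec_def)
lemma nth_cvec: "i < m \<Longrightarrow> cvec m p ! i = coeff (p mod xm1 m) i" by (simp add: cvec_def rmod_def)

lemma cvec_eq_iff: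
  assumes m: "m > 0" shows "cvec m p = cvec m r \<longleftrightarrow> pc m p (r :: 'a::field_gcd poly)"
proof
  assume h: "cvec m p = cvec m r"
  have "p mod xm1 m = r mod xm1 m"
  proof (rule poly_eqI)
    fix i show "coeff (p mod xm1 m) i = coeff (r mod xm1 m) i"
    proof (cases "i < m")
      case True then show ?thesis using arg_cong[OF h, of "\<lambda>l. l ! i"] by (simp add: nth_cvec)
    next
      case False
      then have mi: "m \<le> i" by simp
      show ?thesis using coeff_mod_xm1_ge[OF m mi, of p] coeff_mod_xm1_ge[OF m mi, of r] by simp
    qed
  qed
  then show "pc m p r" by (simp add: pc_iff_mod)
next
  assume "pc m p r" then show "cvec m p = cvec m r" by (simp add: pc_iff_mod cvec_def rmod_def)
qed

lemma degree_Poly_lt: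
  assumes "m > 0" "length xs = m" shows "degree (Poly xs) < m"
proof -
  have "degree (Poly xs) \<le> m - 1"
    by (rule degree_le) (use assms in \<open>auto simp: nth_default_def\<close>)
  then show ?thesis using assms(1) by linarith
qed

lemma cvec_Poly:
  assumes m: "m > 0" and l: "length xs = m" shows "cvec m (Poly xs :: 'a::field_gcd poly) = xs"
proof (rule nth_equalityI)
  show "length (cvec m (Poly xs :: 'a poly)) = length xs" using l by simp
next
  fix i assume "i < length (cvec m (Poly xs :: 'a poly))"
  then have i: "i < m" by simp
  have "cvec m (Poly xs :: 'a poly) ! i = coeff (Poly xs) i"
    using i by (simp add: nth_cvec mod_xm1_small[OF m degree_Poly_lt[OF m l]])
  also have "\<dots> = xs ! i" using i l by (simp add: nth_default_nth)
  finally show "cvec m (Poly xs :: 'a poly) ! i = xs ! i" .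
qed

lemma sum_split_2m:
  fixes f :: "nat \<Rightarrow> 'b::comm_monoid_add" and m :: nat
  shows "(\<Sum>i<m + m. f i) = (\<Sum>i<m. f i) + (\<Sum>i<m. f (i + m))"
proof -
  have "(\<Sum>i<m + m. f i) = sum f {0..<m} + sum f {m..<m + m}"
    by (simp add: atLeast0LessThan[symmetric] sum.atLeastLessThan_concat)
  also have "sum f {m..<m + m} = (\<Sum>i<m. f (i + m))"
    using sum.shift_bounds_nat_ivl[of f 0 m m] by (simp add: atLeast0LessThan)
  finally show ?thesis by (simp add: atLeast0LessThan)
qed

lemma code_iff:
  assumes m: "m > 0" and Dv: "pc m (Dinv * (1 - v * v)) 1"
    and g1: "g1 dvd xm1 m" and g2: "g2 dvd xm1 m"
  shows "cvec m b1 @ cvec m b2 \<in> qc_code m g1 (v * g1) (v * g2) g2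
     \<longleftrightarrow> g1 dvd b1 - v * b2 \<and> g2 dvd b2 - v * (b1 :: 'a::field_gcd poly)"
proof -
  have "cvec m b1 @ cvec m b2 \<in> qc_code m g1 (v * g1) (v * g2) g2
     \<longleftrightarrow> (\<exists>r1 r2. pc m b1 (r1 * g1 + r2 * (v * g2)) \<and> pc m b2 (r1 * (v * g1) + r2 * g2))"
    unfolding qc_code_def by (auto simp: cvec_eq_iff[OF m])
  also have "\<dots> \<longleftrightarrow> g1 dvd b1 - v * b2 \<and> g2 dvd b2 - v * b1"
  proof
    assume "\<exists>r1 r2. pc m b1 (r1 * g1 + r2 * (v * g2)) \<and> pc m b2 (r1 * (v * g1) + r2 * g2)"
    then obtain r1 r2 where r: "pc m b1 (r1 * g1 + r2 * (v * g2))" "pc m b2 (r1 * (v * g1) + r2 * g2)"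
      by blast
    have "pc m (b1 - v * b2) ((r1 * g1 + r2 * (v * g2)) - v * (r1 * (v * g1) + r2 * g2))"
      using r by (intro pc_diff pc_multL)
    moreover have "(r1 * g1 + r2 * (v * g2)) - v * (r1 * (v * g1) + r2 * g2) = g1 * (r1 * (1 - v * v))"
      by (simp add: algebra_simps)
    ultimately have A: "g1 dvd b1 - v * b2" using pc_dvd[OF _ g1] by (metis dvd_triv_left)
    have "pc m (b2 - v * b1) ((r1 * (v * g1) + r2 * g2) - v * (r1 * g1 + r2 * (v * g2)))"
      using r by (intro pc_diff pc_multL)
    moreover have "(r1 * (v * g1) + r2 * g2) - v * (r1 * g1 + r2 * (v * g2)) = g2 * (r2 * (1 - v * v))"
      by (simp add: algebra_simps)
    ultimately have B: "g2 dvd b2 - v * b1" using pc_dvd[OF _ g2] by (metis dvd_triv_left)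
    show "g1 dvd b1 - v * b2 \<and> g2 dvd b2 - v * b1" using A B by simp
  next
    assume "g1 dvd b1 - v * b2 \<and> g2 dvd b2 - v * b1"
    then obtain t1 t2 where t: "b1 - v * b2 = g1 * t1" "b2 - v * b1 = g2 * t2"
      by (auto elim!: dvdE)
    have e1: "(Dinv * t1) * g1 + (Dinv * t2) * (v * g2) = (Dinv * (1 - v * v)) * b1"
    proof -
      have "(Dinv * t1) * g1 + (Dinv * t2) * (v * g2) = Dinv * (g1 * t1) + Dinv * v * (g2 * t2)"
        by (simp add: algebra_simps)
      also have "\<dots> = Dinv * (b1 - v * b2) + Dinv * v * (b2 - v * b1)" by (simp only: t)
      also have "\<dots> = (Dinv * (1 - v * v)) * b1" by (simp add: algebra_simps)
      finally show ?thesis .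
    qed
    have e2: "(Dinv * t1) * (v * g1) + (Dinv * t2) * g2 = (Dinv * (1 - v * v)) * b2"
    proof -
      have "(Dinv * t1) * (v * g1) + (Dinv * t2) * g2 = Dinv * v * (g1 * t1) + Dinv * (g2 * t2)"
        by (simp add: algebra_simps)
      also have "\<dots> = Dinv * v * (b1 - v * b2) + Dinv * (b2 - v * b1)" by (simp only: t)
      also have "\<dots> = (Dinv * (1 - v * v)) * b2" by (simp add: algebra_simps)
      finally show ?thesis .
    qed
    have "pc m ((Dinv * (1 - v * v)) * b1) b1" using pc_multR[OF Dv, of b1] by simp
    moreover have "pc m ((Dinv * (1 - v * v)) * b2) b2" using pc_multR[OF Dv, of b2] by simp
    ultimately show "\<exists>r1 r2. pc m b1 (r1 * g1 + r2 * (v * g2)) \<and> pc m b2 (r1 * (v * g1) + r2 * g2)"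
      using e1 e2 by (metis pc_sym)
  qed
  finally show ?thesis .
qed

context frobsetup
begin

lemma herm_cvec:
  assumes m: "m > 0" and d: "degree a1 < m" "degree a2 < m"
  shows "herm_ip q (cvec m a1 @ cvec m a2) (cvec m b1 @ cvec m b2) = tr m (cj m a1 * b1 + cj m a2 * b2)"
proof -
  have half: "(\<Sum>i<m. (cvec m a ! i) ^ q * (cvec m b ! i)) = tr m (cj m a * b)"
    if da: "degree a < m" for a b
  proof -
    have "(\<Sum>i<m. (cvec m a ! i) ^ q * (cvec m b ! i)) = (\<Sum>i<m. coeff (fp a) i * coeff (b mod xm1 m) i)"
      by (rule sum.cong) (simp_all add: nth_cvec mod_xm1_small[OF m da] sig_def)
    also have "\<dots> = tr m (conjrev m (fp a) * b)" using pairing[OF m, of "fp a" b] da by simp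
    also have "\<dots> = tr m (cj m a * b)"
      by (rule tr_pc) (simp add: cj_def pc_multR conjrev_bar[OF m])
    finally show ?thesis .
  qed
  have "herm_ip q (cvec m a1 @ cvec m a2) (cvec m b1 @ cvec m b2)
     = (\<Sum>i<m + m. ((cvec m a1 @ cvec m a2) ! i) ^ q * ((cvec m b1 @ cvec m b2) ! i))"
    by (simp add: herm_ip_def)
  also have "\<dots> = (\<Sum>i<m. (cvec m a1 ! i) ^ q * (cvec m b1 ! i)) + (\<Sum>i<m. (cvec m a2 ! i) ^ q * (cvec m b2 ! i))"
    by (simp add: sum_split_2m nth_append)
  also have "\<dots> = tr m (cj m a1 * b1 + cj m a2 * b2)" by (simp add: half d tr_add)
  finally show ?thesis .
qed

lemma dual_iff:
  assumes m: "m > 0" and d: "degree a1 < m" "degree a2 < m"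
  shows "cvec m a1 @ cvec m a2 \<in> herm_dual q (2 * m) (qc_code m g1 (v * g1) (v * g2) g2)
    \<longleftrightarrow> xm1 m dvd (cj m a1 + v * cj m a2) * g1 \<and> xm1 m dvd (v * cj m a1 + cj m a2) * g2"
proof -
  let ?P1 = "(cj m a1 + v * cj m a2) * g1" and ?P2 = "(v * cj m a1 + cj m a2) * g2"
  have e: "cj m a1 * (r1 * g1 + r2 * (v * g2)) + cj m a2 * (r1 * (v * g1) + r2 * g2) = r1 * ?P1 + r2 * ?P2" for r1 r2
    by (simp add: algebra_simps)
  have "cvec m a1 @ cvec m a2 \<in> herm_dual q (2 * m) (qc_code m g1 (v * g1) (v * g2) g2)
     \<longleftrightarrow> (\<forall>r1 r2. herm_ip q (cvec m a1 @ cvec m a2)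
            (cvec m (r1 * g1 + r2 * (v * g2)) @ cvec m (r1 * (v * g1) + r2 * g2)) = 0)"
    unfolding herm_dual_def qc_code_def by auto
  also have "\<dots> \<longleftrightarrow> (\<forall>r1 r2. tr m (r1 * ?P1) + tr m (r2 * ?P2) = 0)"
    by (simp only: herm_cvec[OF m d] e tr_add)
  also have "\<dots> \<longleftrightarrow> xm1 m dvd ?P1 \<and> xm1 m dvd ?P2"
  proof
    assume h: "\<forall>r1 r2. tr m (r1 * ?P1) + tr m (r2 * ?P2) = 0"
    have "xm1 m dvd ?P1" by (rule tr_nondeg[OF m]) (use h[rule_format, of _ 0] in simp)
    moreover have "xm1 m dvd ?P2" by (rule tr_nondeg[OF m]) (use h[rule_format, of 0] in simp)
    ultimately show "xm1 m dvd ?P1 \<and> xm1 m dvd ?P2" by simp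
  next
    assume h: "xm1 m dvd ?P1 \<and> xm1 m dvd ?P2"
    have z: "tr m (r * P) = 0" if "xm1 m dvd P" for r P :: "'a poly"
    proof -
      have "pc m (r * P) 0" using that by (simp add: pc_0_iff)
      then show ?thesis using tr_pc tr_0 by metis
    qed
    show "\<forall>r1 r2. tr m (r1 * ?P1) + tr m (r2 * ?P2) = 0" using h z by simp
  qed
  finally show ?thesis .
qed

end


context frobsetup
begin

lemma main_loc:
  fixes g1 g2 v :: "'a poly"
  assumes m: "m > 0"
    and g1: "lead_coeff g1 = 1" "g1 dvd xm1 m" and g2: "lead_coeff g2 = 1" "g2 dvd xm1 m"
    and cop: "gcd (v ^ 2 - 1) (xm1 m) = 1"
  shows "herm_dual q (2 * m) (qc_code m g1 (v * g1) (v * g2) g2)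
           \<subseteq> qc_code m g1 (v * g1) (v * g2) g2
         \<longleftrightarrow>
         g1 dvd rmod m (perpH q m g1 * (1 + v * frob q m (conjrev m v))) \<and>
         g1 dvd rmod m (perpH q m g2 * (frob q m (conjrev m v) + v)) \<and>
         g2 dvd rmod m (perpH q m g2 * (1 + v * frob q m (conjrev m v)))"
proof -
  define Dinv where "Dinv = - fst (bezout_coefficients (v ^ 2 - 1) (xm1 m))"
  define t where "t = snd (bezout_coefficients (v ^ 2 - 1) (xm1 m))"
  have bz: "- Dinv * (v ^ 2 - 1) + t * xm1 m = 1"
    using bezout_coefficients_fst_snd[of "v ^ 2 - 1" "xm1 m"] cop by (simp add: Dinv_def t_def)
  have "Dinv * (1 - v * v) - 1 = - (t * xm1 m)"
    using bz by (simp add: algebra_simps power2_eq_square)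
  then have Dv: "pc m (Dinv * (1 - v * v)) 1" unfolding pc_def by simp
  define h1 where "h1 = xm1 m div g1"
  define h2 where "h2 = xm1 m div g2"
  define w where "w = cj m v"
  define e1 where "e1 = 1 + v * w"
  define e2 where "e2 = w + v"
  let ?C = "qc_code m g1 (v * g1) (v * g2) g2"
  have LHS: "herm_dual q (2 * m) ?C \<subseteq> ?C \<longleftrightarrow>
      (\<forall>a1 a2. degree a1 < m \<longrightarrow> degree a2 < m \<longrightarrow>
            xm1 m dvd (cj m a1 + v * cj m a2) * g1 \<longrightarrow>
            xm1 m dvd (v * cj m a1 + cj m a2) * g2 \<longrightarrow>
            g1 dvd a1 - v * a2 \<and> g2 dvd a2 - v * a1)"
  proof
    assume sub: "herm_dual q (2 * m) ?C \<subseteq> ?C"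
    show "\<forall>a1 a2. degree a1 < m \<longrightarrow> degree a2 < m \<longrightarrow>
            xm1 m dvd (cj m a1 + v * cj m a2) * g1 \<longrightarrow>
            xm1 m dvd (v * cj m a1 + cj m a2) * g2 \<longrightarrow>
            g1 dvd a1 - v * a2 \<and> g2 dvd a2 - v * a1"
    proof (intro allI impI)
      fix a1 a2 :: "'a poly"
      assume d: "degree a1 < m" "degree a2 < m"
        and A: "xm1 m dvd (cj m a1 + v * cj m a2) * g1" "xm1 m dvd (v * cj m a1 + cj m a2) * g2"
      have "cvec m a1 @ cvec m a2 \<in> herm_dual q (2 * m) ?C" using dual_iff[OF m d] A by simp
      then have "cvec m a1 @ cvec m a2 \<in> ?C" using sub by blast
      then show "g1 dvd a1 - v * a2 \<and> g2 dvd a2 - v * a1"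
        using code_iff[OF m Dv g1(2) g2(2)] by simp
    qed
  next
    assume DC: "\<forall>a1 a2. degree a1 < m \<longrightarrow> degree a2 < m \<longrightarrow>
            xm1 m dvd (cj m a1 + v * cj m a2) * g1 \<longrightarrow>
            xm1 m dvd (v * cj m a1 + cj m a2) * g2 \<longrightarrow>
            g1 dvd a1 - v * a2 \<and> g2 dvd a2 - v * a1"
    show "herm_dual q (2 * m) ?C \<subseteq> ?C"
    proof
      fix u assume u: "u \<in> herm_dual q (2 * m) ?C"
      then have lu: "length u = 2 * m" by (simp add: herm_dual_def)
      define a1 :: "'a poly" where "a1 = Poly (take m u)"
      define a2 :: "'a poly" where "a2 = Poly (drop m u)"
      have l1: "length (take m u) = m" and l2: "length (drop m u) = m" using lu by auto
      have ue: "u = cvec m a1 @ cvec m a2"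
        unfolding a1_def a2_def cvec_Poly[OF m l1] cvec_Poly[OF m l2] by simp
      have d: "degree a1 < m" "degree a2 < m"
        unfolding a1_def a2_def using degree_Poly_lt[OF m l1] degree_Poly_lt[OF m l2] by auto
      have "xm1 m dvd (cj m a1 + v * cj m a2) * g1 \<and> xm1 m dvd (v * cj m a1 + cj m a2) * g2"
        using u ue dual_iff[OF m d] by simp
      then have "g1 dvd a1 - v * a2 \<and> g2 dvd a2 - v * a1" using DC d by blast
      then show "u \<in> ?C" using ue code_iff[OF m Dv g1(2) g2(2)] by simp
    qed
  qed
  have pcE1: "pc m (1 + v * frob q m (conjrev m v)) e1"
    unfolding e1_def w_def by (intro pc_add pc_mult pc_refl frob_conjrev[OF m])
  have pcE2: "pc m (frob q m (conjrev m v) + v) e2"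
    unfolding e2_def w_def by (intro pc_add pc_refl frob_conjrev[OF m])
  have R1: "g1 dvd rmod m (perpH q m g1 * (1 + v * frob q m (conjrev m v))) \<longleftrightarrow> g1 dvd cj m h1 * e1"
    unfolding perpH_dvd[OF m g1 g1(2)] h1_def using pc_dvd[OF pc_multL[OF pcE1] g1(2)] .
  have R2: "g1 dvd rmod m (perpH q m g2 * (frob q m (conjrev m v) + v)) \<longleftrightarrow> g1 dvd cj m h2 * e2"
    unfolding perpH_dvd[OF m g2 g1(2)] h2_def using pc_dvd[OF pc_multL[OF pcE2] g1(2)] .
  have R3: "g2 dvd rmod m (perpH q m g2 * (1 + v * frob q m (conjrev m v))) \<longleftrightarrow> g2 dvd cj m h2 * e1"
    unfolding perpH_dvd[OF m g2 g2(2)] h2_def using pc_dvd[OF pc_multL[OF pcE1] g2(2)] .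
  show ?thesis
    unfolding LHS R1 R2 R3
    by (rule dc_iff[OF m g1 g2 Dv h1_def h2_def w_def e1_def e2_def])
qed

end

theorem mainTheorem12:
  fixes q m :: nat and g1 g2 v :: "'a::{finite,field_gcd} poly"
  assumes "prime_power q" and "card (UNIV :: 'a set) = q ^ 2" and "m > 0"
    and "lead_coeff g1 = 1" and "g1 dvd xm1 m" and "lead_coeff g2 = 1" and "g2 dvd xm1 m"
    and "degree v < m"
    and "gcd (v ^ 2 - 1) (xm1 m) = 1"
  shows "herm_dual q (2 * m) (qc_code m g1 (v * g1) (v * g2) g2)
           \<subseteq> qc_code m g1 (v * g1) (v * g2) g2
         \<longleftrightarrow>
         g1 dvd rmod m (perpH q m g1 * (1 + v * frob q m (conjrev m v))) \<and>
         g1 dvd rmod m (perpH q m g2 * (frob q m (conjrev m v) + v)) \<and>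
         g2 dvd rmod m (perpH q m g2 * (1 + v * frob q m (conjrev m v)))"
proof -
  interpret frobsetup q "TYPE('a)"
    by unfold_locales (use assms(1,2) in auto)
  show ?thesis by (rule main_loc[OF assms(3-7) assms(9)])
qed

end
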